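(* Let $G=(V,E)$ be a finite weakly connected directed graph whose condensation $\mathbb G$ has exactly one sink vertex. Let $\mathcal H=\mathbb C^{V}$ with orthonormal basis $\{|v\rangle : v\in V\}$ and let $\mathcal L=\{c_{(v,w)}|w\rangle\langle v| : (v,w)\in E\}$ for arbitrary nonzero constants $c_{(v,w)}\in\mathbb C\setminus\{0\}$. Then for an arbitrary Hermitian operator $H$ on $\mathcal H$, the GKSL evolution $$\frac{d}{dt}\varrho=-\mathrm i[H,\varrho]+\sum_{L\in\mathcal L}\Big(L\varrho L^\dagger-\tfrac12\{L^\dagger L,\varrho\}\Big)$$ is relaxing, i.e. it has a unique stationary state.
   Context: A digraph is weakly connected if its underlying undirected graph is connected. The condensation $\mathbb G$ of $G$ is the directed graph whose vertices are the maximal strongly connected components of $G$, with an arc from component $\mathbf v$ to component $\mathbf w\ne\mathbf v$ iff there exist $v\in\mathbf v$, $w\in\mathbf w$ with $(v,w)\in E$; it is acyclic. A sink vertex is a vertex of outdegree zero. A stationary state is a density matrix $\varrho$ with right-hand side equal to $0$; relaxing means the stationary state is unique. $\{A,B\}=AB+BA$. *)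

theory Defs
  imports "HOL-Analysis.Analysis"
begin

text \<open>Operators on H = C^V are represented as complex matrices indexed by the finite
vertex type 'v (the basis vector |v> corresponds to index v).\<close>

definition mscale :: "complex \<Rightarrow> complex^'v^'v \<Rightarrow> complex^'v^'v" where
  "mscale a A = (\<chi> i j. a * A $ i $ j)"

definition adjoint :: "complex^'v^'v \<Rightarrow> complex^'v^'v" where
  "adjoint A = (\<chi> i j. cnj (A $ j $ i))"

definition hermitian :: "complex^'v^'v \<Rightarrow> bool" where
  "hermitian A \<longleftrightarrow> adjoint A = A"

definition mtrace :: "complex^'v::finite^'v \<Rightarrow> complex" where
  "mtrace A = (\<Sum>i\<in>UNIV. A $ i $ i)"

definition positive_semidef :: "complex^'v::finite^'v \<Rightarrow> bool" where
  "positive_semidef A \<longleftrightarrow> (\<forall>x::complex^'v. 0 \<le> Re (\<Sum>i\<in>UNIV. cnj (x $ i) * (A *v x) $ i))"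

definition density_matrix :: "complex^'v::finite^'v \<Rightarrow> bool" where
  "density_matrix \<rho> \<longleftrightarrow> hermitian \<rho> \<and> positive_semidef \<rho> \<and> mtrace \<rho> = 1"

definition ketbra :: "'v \<Rightarrow> 'v \<Rightarrow> complex^'v^'v" where
  "ketbra w v = (\<chi> i j. if i = w \<and> j = v then 1 else 0)"

definition commutator :: "complex^'v::finite^'v \<Rightarrow> complex^'v^'v \<Rightarrow> complex^'v^'v" where
  "commutator A B = A ** B - B ** A"

definition anticommutator :: "complex^'v::finite^'v \<Rightarrow> complex^'v^'v \<Rightarrow> complex^'v^'v" where
  "anticommutator A B = A ** B + B ** A"

definition gksl :: "complex^'v::finite^'v \<Rightarrow> (complex^'v^'v) set \<Rightarrow> complex^'v^'v \<Rightarrow> complex^'v^'v" where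
  "gksl H Ls \<rho> = mscale (- \<i>) (commutator H \<rho>)
     + (\<Sum>L\<in>Ls. L ** \<rho> ** adjoint L - mscale (1/2) (anticommutator (adjoint L ** L) \<rho>))"

definition stationary_state :: "complex^'v::finite^'v \<Rightarrow> (complex^'v^'v) set \<Rightarrow> complex^'v^'v \<Rightarrow> bool" where
  "stationary_state H Ls \<rho> \<longleftrightarrow> density_matrix \<rho> \<and> gksl H Ls \<rho> = 0"

definition relaxing :: "complex^'v::finite^'v \<Rightarrow> (complex^'v^'v) set \<Rightarrow> bool" where
  "relaxing H Ls \<longleftrightarrow> (\<exists>!\<rho>. stationary_state H Ls \<rho>)"

text \<open>Graph notions for a digraph with vertex set UNIV :: 'v set and arc set E.\<close>
definition weakly_connected :: "('v \<times> 'v) set \<Rightarrow> bool" where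
  "weakly_connected E \<longleftrightarrow> (\<forall>u v. (u, v) \<in> (E \<union> E\<inverse>)\<^sup>*)"

definition scc_of :: "('v \<times> 'v) set \<Rightarrow> 'v \<Rightarrow> 'v set" where
  "scc_of E v = {w. (v, w) \<in> E\<^sup>* \<and> (w, v) \<in> E\<^sup>*}"

definition sccs :: "('v \<times> 'v) set \<Rightarrow> 'v set set" where
  "sccs E = range (scc_of E)"

text \<open>A component is a sink of the condensation iff no arc leaves it.\<close>
definition condensation_sink :: "('v \<times> 'v) set \<Rightarrow> 'v set \<Rightarrow> bool" where
  "condensation_sink E C \<longleftrightarrow> C \<in> sccs E \<and> (\<forall>v w. v \<in> C \<and> (v, w) \<in> E \<longrightarrow> w \<in> C)"

end

theory Submission
  imports Defs
begin

definition hs :: "complex^'v::finite^'v \<Rightarrow> complex^'v^'v \<Rightarrow> complex" where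
  "hs A B = (\<Sum>i\<in>UNIV. \<Sum>j\<in>UNIV. cnj (A$i$j) * B$i$j)"

definition Pr :: "'v \<Rightarrow> complex^'v^'v" where "Pr v = ketbra v v"

lemma mscale_nth[simp]: "mscale a A $ i $ j = a * A $ i $ j" by (simp add: mscale_def)
lemma adjoint_nth[simp]: "adjoint A $ i $ j = cnj (A $ j $ i)" by (simp add: adjoint_def)
lemma ketbra_nth[simp]: "ketbra w v $ i $ j = (if i = w \<and> j = v then 1 else 0)" by (simp add: ketbra_def)
lemma Pr_nth[simp]: "Pr v $ i $ j = (if i = v \<and> j = v then 1 else 0)" by (simp add: Pr_def)

lemma mmult_nth: "(A ** B) $ i $ j = (\<Sum>k\<in>UNIV. A$i$k * B$k$j)"
  by (simp add: matrix_matrix_mult_def)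

lemma hs_adj_left: "hs Y (A ** X) = hs (adjoint A ** Y) X"
proof -
  have "hs Y (A ** X) = (\<Sum>i\<in>UNIV. \<Sum>j\<in>UNIV. \<Sum>k\<in>UNIV. cnj (Y$i$j) * A$i$k * X$k$j)"
    by (simp add: hs_def mmult_nth sum_distrib_left mult.assoc)
  also have "\<dots> = (\<Sum>i\<in>UNIV. \<Sum>k\<in>UNIV. \<Sum>j\<in>UNIV. cnj (Y$i$j) * A$i$k * X$k$j)"
    by (rule sum.cong[OF refl], rule sum.swap)
  also have "\<dots> = (\<Sum>k\<in>UNIV. \<Sum>i\<in>UNIV. \<Sum>j\<in>UNIV. cnj (Y$i$j) * A$i$k * X$k$j)"
    by (rule sum.swap)
  also have "\<dots> = (\<Sum>k\<in>UNIV. \<Sum>j\<in>UNIV. \<Sum>i\<in>UNIV. cnj (Y$i$j) * A$i$k * X$k$j)"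
    by (rule sum.cong[OF refl], rule sum.swap)
  also have "\<dots> = hs (adjoint A ** Y) X"
    by (simp add: hs_def mmult_nth sum_distrib_right sum_distrib_left mult_ac)
  finally show ?thesis .
qed

lemma hs_adj_right: "hs Y (X ** A) = hs (Y ** adjoint A) X"
proof -
  have "hs Y (X ** A) = (\<Sum>i\<in>UNIV. \<Sum>j\<in>UNIV. \<Sum>k\<in>UNIV. cnj (Y$i$j) * X$i$k * A$k$j)"
    by (simp add: hs_def mmult_nth sum_distrib_left mult.assoc)
  also have "\<dots> = (\<Sum>i\<in>UNIV. \<Sum>k\<in>UNIV. \<Sum>j\<in>UNIV. cnj (Y$i$j) * X$i$k * A$k$j)"
    by (rule sum.cong[OF refl], rule sum.swap)
  also have "\<dots> = hs (Y ** adjoint A) X"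
    by (simp add: hs_def mmult_nth sum_distrib_right sum_distrib_left mult_ac)
  finally show ?thesis .
qed

lemma hs_add_right: "hs Y (A + B) = hs Y A + hs Y B"
  by (simp add: hs_def algebra_simps sum.distrib)
lemma hs_diff_right: "hs Y (A - B) = hs Y A - hs Y B"
  by (simp add: hs_def algebra_simps sum_subtractf)
lemma hs_add_left: "hs (A + B) Y = hs A Y + hs B Y"
  by (simp add: hs_def algebra_simps sum.distrib)
lemma hs_diff_left: "hs (A - B) Y = hs A Y - hs B Y"
  by (simp add: hs_def algebra_simps sum_subtractf)
lemma hs_scale_right: "hs Y (mscale a A) = a * hs Y A"
  by (simp add: hs_def sum_distrib_left mult_ac)
lemma hs_scale_left: "hs (mscale a A) Y = cnj a * hs A Y"
  by (simp add: hs_def sum_distrib_left mult_ac)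
lemma hs_sum_right: "hs Y (sum f S) = (\<Sum>x\<in>S. hs Y (f x))"
  by (simp add: hs_def sum_distrib_left sum_distrib_right algebra_simps sum.swap[of _ S])
lemma hs_sum_left: "hs (sum f S) Y = (\<Sum>x\<in>S. hs (f x) Y)"
  by (simp add: hs_def sum_distrib_left sum_distrib_right algebra_simps sum.swap[of _ S]
        cnj_sum)


definition Dis :: "('v::finite \<times> 'v) set \<Rightarrow> ('v \<times> 'v \<Rightarrow> complex) \<Rightarrow> complex^'v^'v \<Rightarrow> complex^'v^'v" where
  "Dis E g \<rho> = (\<Sum>e\<in>E. mscale (g e) (mscale (\<rho>$fst e$fst e) (Pr (snd e))
        - mscale (1/2) (Pr (fst e) ** \<rho> + \<rho> ** Pr (fst e))))"

definition DisS :: "('v::finite \<times> 'v) set \<Rightarrow> ('v \<times> 'v \<Rightarrow> complex) \<Rightarrow> complex^'v^'v \<Rightarrow> complex^'v^'v" where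
  "DisS E g A = (\<Sum>e\<in>E. mscale (g e) (mscale (A$snd e$snd e) (Pr (fst e))
        - mscale (1/2) (Pr (fst e) ** A + A ** Pr (fst e))))"

definition Lop where
  "Lop H E g \<rho> = mscale (- \<i>) (H ** \<rho> - \<rho> ** H) + Dis E g \<rho>"

definition Lstar where
  "Lstar H E g A = mscale \<i> (H ** A - A ** H) + DisS E g A"

lemma adjoint_Pr[simp]: "adjoint (Pr v) = Pr v"
  by (simp add: vec_eq_iff)

lemma sum_sum_delta: fixes f :: "'v::finite \<Rightarrow> 'v \<Rightarrow> 'a::comm_monoid_add" shows "(\<Sum>i\<in>UNIV. \<Sum>j\<in>UNIV. if i = w \<and> j = w then f i j else 0) = f w w"
proof -
  have "\<And>i. (\<Sum>j\<in>UNIV. if i = w \<and> j = w then f i j else 0) = (\<Sum>j\<in>UNIV. if j = w then (if i = w then f w w else 0) else 0)"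
    by (intro sum.cong refl) auto
  then have "\<And>i. (\<Sum>j\<in>UNIV. if i = w \<and> j = w then f i j else 0) = (if i = w then f w w else 0)"
    by (simp only: sum.delta) simp
  then show ?thesis by (simp only: sum.delta) simp
qed
lemma hs_Pr_right: "hs Y (Pr w) = cnj (Y$w$w)"
proof -
  have "hs Y (Pr w) = (\<Sum>i\<in>UNIV. \<Sum>j\<in>UNIV. if i = w \<and> j = w then cnj (Y$i$j) else 0)"
    unfolding hs_def by (intro sum.cong refl) auto
  then show ?thesis by (simp only: sum_sum_delta)
qed
lemma hs_Pr_left: "hs (Pr w) Y = Y$w$w"
proof -
  have "hs (Pr w) Y = (\<Sum>i\<in>UNIV. \<Sum>j\<in>UNIV. if i = w \<and> j = w then Y$i$j else 0)"
    unfolding hs_def by (intro sum.cong refl) auto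
  then show ?thesis by (simp only: sum_sum_delta)
qed

lemma hs_Dis:
  assumes "\<forall>e. cnj (g e) = g e"
  shows "hs Y (Dis E g X) = hs (DisS E g Y) X"
proof -
  have "hs Y (Dis E g X) = (\<Sum>e\<in>E. g e * (X$fst e$fst e * cnj (Y$snd e$snd e)
      - 1/2 * (hs Y (Pr (fst e) ** X) + hs Y (X ** Pr (fst e)))))"
    unfolding Dis_def hs_sum_right hs_scale_right hs_diff_right hs_Pr_right hs_add_right by simp
  also have "\<dots> = (\<Sum>e\<in>E. g e * (X$fst e$fst e * cnj (Y$snd e$snd e)
      - 1/2 * (hs (Pr (fst e) ** Y) X + hs (Y ** Pr (fst e)) X)))"
    by (intro sum.cong refl) (simp only: hs_adj_left[of Y _ X] hs_adj_right[of Y X] adjoint_Pr)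
  also have "\<dots> = hs (DisS E g Y) X"
    unfolding DisS_def hs_sum_left hs_scale_left hs_diff_left hs_Pr_left hs_add_left
    using assms by (simp add: mult_ac assms[rule_format])
  finally show ?thesis .
qed

lemma hs_L:
  assumes "hermitian H" "\<forall>e. cnj (g e) = g e"
  shows "hs Y (Lop H E g X) = hs (Lstar H E g Y) X"
proof -
  have aH: "adjoint H = H" using assms(1) by (simp add: hermitian_def)
  show ?thesis
    unfolding Lop_def Lstar_def hs_add_right hs_add_left hs_scale_right hs_scale_left
      hs_diff_right hs_diff_left hs_adj_left[of Y H X] hs_adj_right[of Y X H] aH hs_Dis[OF assms(2)]
    by simp
qed


lemma msk_nth: "mscale c (ketbra w v) $ i $ k = (if i = w \<and> k = v then c else 0)" by simp
lemma adj_msk_nth: "adjoint (mscale c (ketbra w v)) $ i $ k = (if k = w \<and> i = v then cnj c else 0)" by simp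

lemma ifz_mult: "(if b then a else 0) * (x::complex) = (if b then a * x else 0)" by simp
lemma mult_ifz: "(x::complex) * (if b then a else 0) = (if b then x * a else 0)" by simp
lemma if_conj_z: "(if P \<and> Q then a else (0::complex)) = (if P then (if Q then a else 0) else 0)" by simp

lemma sum_if_l: fixes f :: "'v::finite \<Rightarrow> complex"
  shows "(\<Sum>k\<in>UNIV. (if P \<and> k = v then a else 0) * f k) = (if P then a * f v else 0)"
  by (cases P) (simp_all add: ifz_mult sum.delta')
lemma sum_if_r: fixes f :: "'v::finite \<Rightarrow> complex"
  shows "(\<Sum>k\<in>UNIV. f k * (if k = v \<and> P then a else 0)) = (if P then f v * a else 0)"
  by (cases P) (simp_all add: mult_ifz sum.delta)

lemma term1: "mscale c (ketbra w v) ** \<rho> ** adjoint (mscale c (ketbra w v))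
   = mscale (cnj c * c) (mscale (\<rho>$v$v) (Pr w))"
  unfolding vec_eq_iff mmult_nth msk_nth adj_msk_nth sum_if_l
  by (auto simp: mult_ifz ifz_mult sum.delta if_conj_z)

lemma term2: "adjoint (mscale c (ketbra w v)) ** mscale c (ketbra w v) = mscale (cnj c * c) (Pr v)"
  unfolding vec_eq_iff mmult_nth msk_nth adj_msk_nth
  by (auto simp: mult_ifz ifz_mult sum.delta if_conj_z)


lemma inj_jumps:
  assumes "\<forall>e\<in>E. c e \<noteq> 0"
  shows "inj_on (\<lambda>(v, w). mscale (c (v, w)) (ketbra w v)) E"
proof (rule inj_onI)
  fix x y assume x: "x \<in> E" and y: "y \<in> E"
    and eq: "(\<lambda>(v, w). mscale (c (v, w)) (ketbra w v)) x = (\<lambda>(v, w). mscale (c (v, w)) (ketbra w v)) y"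
  obtain v w where xv: "x = (v, w)" by (cases x)
  obtain v' w' where yv: "y = (v', w')" by (cases y)
  have "mscale (c (v, w)) (ketbra w v) $ w $ v = mscale (c (v', w')) (ketbra w' v') $ w $ v"
    using eq xv yv by simp
  then have "c (v, w) = (if w = w' \<and> v = v' then c (v', w') else 0)" by simp
  with assms x xv show "x = y" using yv by (auto split: if_splits)
qed

lemma gksl_eq:
  assumes "\<forall>e\<in>E. c e \<noteq> 0"
  shows "gksl H ((\<lambda>(v, w). mscale (c (v, w)) (ketbra w v)) ` E) \<rho> = Lop H E (\<lambda>e. cnj (c e) * c e) \<rho>"
proof -
  have "(\<Sum>L\<in>(\<lambda>(v, w). mscale (c (v, w)) (ketbra w v)) ` E.
           L ** \<rho> ** adjoint L - mscale (1/2) (anticommutator (adjoint L ** L) \<rho>))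
     = (\<Sum>e\<in>E. (\<lambda>L. L ** \<rho> ** adjoint L - mscale (1/2) (anticommutator (adjoint L ** L) \<rho>))
           ((\<lambda>(v, w). mscale (c (v, w)) (ketbra w v)) e))"
    by (rule sum.reindex[OF inj_jumps[OF assms], unfolded comp_def])
  also have "\<dots> = Dis E (\<lambda>e. cnj (c e) * c e) \<rho>"
    unfolding Dis_def
  proof (rule sum.cong[OF refl])
    fix e assume "e \<in> E"
    obtain v w where e: "e = (v, w)" by (cases e)
    show "(\<lambda>L. L ** \<rho> ** adjoint L - mscale (1/2) (anticommutator (adjoint L ** L) \<rho>))
           ((\<lambda>(v, w). mscale (c (v, w)) (ketbra w v)) e) =
         mscale (cnj (c e) * c e) (mscale (\<rho>$fst e$fst e) (Pr (snd e))
        - mscale (1/2) (Pr (fst e) ** \<rho> + \<rho> ** Pr (fst e)))"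
      unfolding e by (simp add: term1 term2 anticommutator_def vec_eq_iff mmult_nth
          sum_distrib_left algebra_simps)
  qed
  finally show ?thesis unfolding gksl_def Lop_def commutator_def by simp
qed


definition ip :: "complex^'v::finite \<Rightarrow> complex^'v \<Rightarrow> complex" where
  "ip a b = (\<Sum>i\<in>UNIV. cnj (a$i) * b$i)"

definition qf :: "complex^'v::finite^'v \<Rightarrow> complex^'v \<Rightarrow> complex" where
  "qf B x = ip x (B *v x)"

lemma mv_nth: "(B *v x) $ i = (\<Sum>j\<in>UNIV. B$i$j * x$j)"
  by (simp add: matrix_vector_mult_def)

lemma herm_sym:
  assumes "hermitian B"
  shows "ip y (B *v z) = ip (B *v y) z"
proof -
  have B: "\<And>i j. cnj (B$i$j) = B$j$i" using assms
    by (metis adjoint_nth hermitian_def)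
  have "ip y (B *v z) = (\<Sum>i\<in>UNIV. \<Sum>j\<in>UNIV. cnj (y$i) * B$i$j * z$j)"
    by (simp add: ip_def mv_nth sum_distrib_left mult.assoc)
  also have "\<dots> = (\<Sum>j\<in>UNIV. \<Sum>i\<in>UNIV. cnj (y$i) * B$i$j * z$j)"
    by (rule sum.swap)
  also have "\<dots> = ip (B *v y) z"
    by (simp add: ip_def mv_nth sum_distrib_right sum_distrib_left mult_ac B)
  finally show ?thesis .
qed

lemma ip_add_left: "ip (a + b) c = ip a c + ip b c"
  by (simp add: ip_def algebra_simps sum.distrib)
lemma ip_add_right: "ip c (a + b) = ip c a + ip c b"
  by (simp add: ip_def algebra_simps sum.distrib)
lemma ip_scale_left: "ip (k *s a) c = cnj k * ip a c"
  by (simp add: ip_def sum_distrib_left mult_ac)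
lemma ip_scale_right: "ip c (k *s a) = k * ip c a"
  by (simp add: ip_def sum_distrib_left mult_ac)
lemma mv_add: "B *v (a + b) = B *v a + B *v b"
  by (simp add: matrix_vector_right_distrib)
lemma mv_scale: fixes B :: "complex^'n::finite^'m::finite" shows "B *v (k *s a) = k *s (B *v a)"
  by (auto simp: vec_eq_iff mv_nth sum_distrib_left intro!: sum.cong)
lemma ip_cnj: "ip a b = cnj (ip b a)"
  by (simp add: ip_def mult.commute)

lemma Re_cnj_self: "Re (cnj z * z) = (cmod z)^2"
  by (simp add: cmod_power2) (simp add: power2_eq_square)

lemma ip_self_Re: "Re (ip a a) = (\<Sum>i\<in>UNIV. (cmod (a$i))^2)"
  unfolding ip_def Re_sum Re_cnj_self ..

lemma ip_self_zero: "Re (ip a a) = 0 \<Longrightarrow> a = 0"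
proof -
  assume "Re (ip a a) = 0"
  then have "(\<Sum>i\<in>UNIV. (cmod (a$i))^2) = 0" by (simp add: ip_self_Re)
  then have "\<forall>i\<in>UNIV. (cmod (a$i))^2 = 0"
    by (subst (asm) sum_nonneg_eq_0_iff) auto
  then show "a = 0" by (simp add: vec_eq_iff)
qed

lemma real_aux:
  fixes a b :: real assumes "0 < a" "0 \<le> b"
  shows "2 * (- a / (b + 1)) * a + (- a / (b + 1))^2 * b < 0"
proof -
  define t where "t = - a / (b + 1)"
  have t0: "t < 0" using assms unfolding t_def by (simp add: divide_neg_pos)
  have "- t * b \<le> a" using assms unfolding t_def by (simp add: field_simps)
  then have "0 < 2 * a + t * b" using assms by linarith
  then have "t * (2 * a + t * b) < 0" using t0 by (simp add: mult_neg_pos)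
  then show ?thesis unfolding t_def[symmetric] by (simp add: algebra_simps power2_eq_square)
qed

lemma psd_kernel:
  assumes herm: "hermitian B" and psd: "\<And>x. 0 \<le> Re (qf B x)" and y: "Re (qf B y) = 0"
  shows "B *v y = 0"
proof -
  let ?z = "B *v y"
  let ?a = "Re (ip ?z ?z)"
  let ?b = "Re (qf B ?z)"
  have b0: "0 \<le> ?b" by (rule psd)
  have key: "0 \<le> 2 * t * ?a + t^2 * ?b" for t :: real
  proof -
    have "qf B (y + complex_of_real t *s ?z) = qf B y + complex_of_real t * (ip y (B *v ?z) + ip ?z ?z)
        + (complex_of_real t)^2 * qf B ?z"
      unfolding qf_def mv_add mv_scale ip_add_left ip_add_right ip_scale_left ip_scale_right
      by (simp add: algebra_simps power2_eq_square)
    moreover have "ip y (B *v ?z) = ip ?z ?z" by (rule herm_sym[OF herm])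
    ultimately have "Re (qf B (y + complex_of_real t *s ?z)) = Re (qf B y) + 2 * t * ?a + t^2 * ?b"
      by (simp add: power2_eq_square)
    then show ?thesis using psd[of "y + complex_of_real t *s ?z"] y by simp
  qed
  have a0: "0 \<le> ?a" by (simp add: ip_self_Re sum_nonneg)
  have "?a = 0"
  proof (rule ccontr)
    assume "?a \<noteq> 0"
    with a0 have ap: "0 < ?a" by simp
    show False using key[of "- ?a / (?b + 1)"] real_aux[OF ap b0] by linarith
  qed
  then show ?thesis by (rule ip_self_zero)
qed


lemma sink_exists_below:
  fixes E :: "('v::finite \<times> 'v) set"
  shows "\<exists>x. (u, x) \<in> E\<^sup>* \<and> condensation_sink E (scc_of E x)"
proof -
  let ?R = "\<lambda>x. {y. (x, y) \<in> E\<^sup>*}"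
  obtain x where ux: "(u, x) \<in> E\<^sup>* " and min: "\<And>y. (u, y) \<in> E\<^sup>* \<Longrightarrow> card (?R x) \<le> card (?R y)"
    using ex_has_least_nat[of "\<lambda>x. (u, x) \<in> E\<^sup>* " u "\<lambda>x. card (?R x)"] by auto
  have bk: "(y, x) \<in> E\<^sup>* " if xy: "(x, y) \<in> E\<^sup>* " for y
  proof -
    have sub: "?R y \<subseteq> ?R x" using xy by (auto intro: rtrancl_trans)
    have "card (?R x) \<le> card (?R y)" using min[of y] ux xy by (auto intro: rtrancl_trans)
    moreover have "card (?R y) \<le> card (?R x)" using sub by (intro card_mono) auto
    ultimately have "?R y = ?R x" using sub by (intro card_subset_eq) auto
    then show ?thesis by auto
  qed
  have "condensation_sink E (scc_of E x)"
    unfolding condensation_sink_def sccs_def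
  proof (intro conjI allI impI)
    show "scc_of E x \<in> range (scc_of E)" by simp
    fix v w assume "v \<in> scc_of E x \<and> (v, w) \<in> E"
    then have xv: "(x, v) \<in> E\<^sup>* " and vw: "(v, w) \<in> E" by (auto simp: scc_of_def)
    then have "(x, w) \<in> E\<^sup>* " by auto
    then show "w \<in> scc_of E x" using bk by (auto simp: scc_of_def)
  qed
  with ux show ?thesis by blast
qed

lemma unique_sink_reach:
  fixes E :: "('v::finite \<times> 'v) set"
  assumes "\<exists>!C. condensation_sink E C" "condensation_sink E S"
  shows "S \<noteq> {}" "\<And>u s. s \<in> S \<Longrightarrow> (u, s) \<in> E\<^sup>* "
proof -
  show "(u, s) \<in> E\<^sup>* " if "s \<in> S" for u s
  proof -
    obtain x where ux: "(u, x) \<in> E\<^sup>* " and cs: "condensation_sink E (scc_of E x)"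
      using sink_exists_below by blast
    have "S = scc_of E x" using assms cs by blast
    then show ?thesis using that ux by (auto simp: scc_of_def intro: rtrancl_trans)
  qed
  obtain x where cs: "condensation_sink E (scc_of E x)"
    using sink_exists_below by blast
  have "S = scc_of E x" using assms cs by blast
  then show "S \<noteq> {}" by (auto simp: scc_of_def)
qed

lemma unique_sink_noout:
  fixes E :: "('v::finite \<times> 'v) set"
  assumes "\<exists>!C. condensation_sink E C" "condensation_sink E S" "\<forall>w. (v, w) \<notin> E"
  shows "S = {v}"
proof -
  have "\<And>s. s \<in> S \<Longrightarrow> s = v"
  proof -
    fix s assume "s \<in> S"
    then have "(v, s) \<in> E\<^sup>* " using unique_sink_reach(2)[OF assms(1,2)] by blast
    then show "s = v" using assms(3) by (cases rule: converse_rtranclE) auto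
  qed
  with unique_sink_reach(1)[OF assms(1,2)] show ?thesis by blast
qed


lemma qf_expand: "qf B y = (\<Sum>i\<in>UNIV. \<Sum>j\<in>UNIV. cnj (y$i) * B$i$j * y$j)"
  by (simp add: qf_def ip_def mv_nth sum_distrib_left mult.assoc)

lemma qf_add: "qf (X + Y) y = qf X y + qf Y y"
  by (simp add: qf_expand algebra_simps sum.distrib)
lemma qf_diff: "qf (X - Y) y = qf X y - qf Y y"
  by (simp add: qf_expand algebra_simps sum_subtractf)
lemma qf_scale: "qf (mscale a X) y = a * qf X y"
  by (simp add: qf_expand sum_distrib_left mult_ac)
lemma qf_sum: "qf (sum f S) y = (\<Sum>x\<in>S. qf (f x) y)"
  by (simp add: qf_expand sum_distrib_left sum_distrib_right algebra_simps sum.swap[of _ S])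
lemma qf_mmult: "qf (X ** Y) y = ip y (X *v (Y *v y))"
  by (simp add: qf_def matrix_vector_mul_assoc)
lemma ip_zero_right[simp]: "ip y 0 = 0" by (simp add: ip_def)
lemma ip_zero_left[simp]: "ip 0 y = 0" by (simp add: ip_def)
lemma mv_zero[simp]: "(B::complex^'n::finite^'m::finite) *v 0 = 0"
  by (simp add: vec_eq_iff mv_nth)

lemma qf_Pr: "qf (Pr u) y = cnj (y$u) * y$u"
proof -
  have "qf (Pr u) y = (\<Sum>i\<in>UNIV. \<Sum>j\<in>UNIV. if i = u \<and> j = u then cnj (y$i) * y$j else 0)"
    unfolding qf_expand by (intro sum.cong refl) auto
  then show ?thesis by (simp only: sum_sum_delta)
qed

lemma qf_axis: "qf B (axis w 1) = B$w$w"
proof -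
  have "qf B (axis w 1) = (\<Sum>i\<in>UNIV. \<Sum>j\<in>UNIV. if i = w \<and> j = w then B$i$j else 0)"
    unfolding qf_expand by (intro sum.cong refl) (auto simp: axis_def)
  then show ?thesis by (simp only: sum_sum_delta)
qed

lemma cmod_sq: "cmod z * cmod z = Re z * Re z + Im z * Im z"
  using cmod_power2[of z] by (simp add: power2_eq_square)

lemma herm_diag_real: "hermitian B \<Longrightarrow> cnj (B$i$i) = B$i$i"
  by (metis adjoint_nth hermitian_def)

lemma kernel_step:
  fixes H B :: "complex^'v::finite^'v" and E :: "('v \<times> 'v) set"
  assumes hH: "hermitian H" and greal: "\<forall>e. cnj (g e) = g e" and gpos: "\<forall>e\<in>E. 0 < Re (g e)"
    and hB: "hermitian B" and psd: "\<And>x. 0 \<le> Re (qf B x)" and LB: "Lstar H E g B = 0"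
    and By: "B *v y = 0" and e: "(v, w) \<in> E" and yv: "y$v \<noteq> 0"
  shows "B *v axis w 1 = 0"
proof -
  have z1: "qf (H ** B) y = 0" by (simp add: qf_mmult By)
  have z2: "qf (B ** H) y = 0" by (simp add: qf_mmult herm_sym[OF hB] By)
  have z3: "qf (Pr u ** B) y = 0" for u by (simp add: qf_mmult By)
  have z4: "qf (B ** Pr u) y = 0" for u by (simp add: qf_mmult herm_sym[OF hB] By)
  have "qf (Lstar H E g B) y = (\<Sum>e\<in>E. g e * (B$snd e$snd e * (cnj (y$fst e) * y$fst e)))"
    unfolding Lstar_def DisS_def qf_add qf_scale qf_diff qf_sum qf_Pr z1 z2 z3 z4 by simp
  then have sum0: "(\<Sum>e\<in>E. g e * (B$snd e$snd e * (cnj (y$fst e) * y$fst e))) = 0"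
    using LB by (simp add: qf_expand)
  have Bd: "0 \<le> Re (B$u$u)" for u using psd[of "axis u 1"] by (simp add: qf_axis)
  have termre: "Re (g e * (B$snd e$snd e * (cnj (y$fst e) * y$fst e)))
      = Re (g e) * Re (B$snd e$snd e) * (cmod (y$fst e))^2" for e
  proof -
    have "Im (g e) = 0" using greal[rule_format, of e] by (metis cnj.simps(2) complex_cnj_cancel_iff neg_equal_zero complex.sel(2)) 
    moreover have "Im (B$snd e$snd e) = 0" using herm_diag_real[OF hB, of "snd e"]
      by (metis cnj.simps(2) neg_equal_zero)
    ultimately show ?thesis by (simp add: power2_eq_square cmod_sq)
  qed
  have "(\<Sum>e\<in>E. Re (g e) * Re (B$snd e$snd e) * (cmod (y$fst e))^2) = 0"
  proof -
    have "Re (\<Sum>e\<in>E. g e * (B$snd e$snd e * (cnj (y$fst e) * y$fst e))) = 0"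
      using sum0 by (simp only: zero_complex.sel)
    then show ?thesis by (simp only: Re_sum termre)
  qed
  then have "\<forall>e\<in>E. Re (g e) * Re (B$snd e$snd e) * (cmod (y$fst e))^2 = 0"
    using gpos Bd by (subst (asm) sum_nonneg_eq_0_iff) (auto intro!: mult_nonneg_nonneg)
  then have "Re (g (v,w)) * Re (B$w$w) * (cmod (y$v))^2 = 0" using e by force
  then have "Re (B$w$w) = 0" using gpos e yv by auto
  then have "Re (qf B (axis w 1)) = 0" by (simp add: qf_axis)
  then show ?thesis by (rule psd_kernel[OF hB psd])
qed


lemma kernel_sink:
  fixes H B :: "complex^'v::finite^'v" and E :: "('v \<times> 'v) set"
  assumes hH: "hermitian H" and greal: "\<forall>e. cnj (g e) = g e" and gpos: "\<forall>e\<in>E. 0 < Re (g e)"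
    and hB: "hermitian B" and psd: "\<And>x. 0 \<le> Re (qf B x)" and LB: "Lstar H E g B = 0"
    and uniq: "\<exists>!C. condensation_sink E C" and S: "condensation_sink E S"
    and By: "B *v y = 0" and y0: "y \<noteq> 0" and sS: "s \<in> S"
  shows "B *v axis s 1 = 0"
proof -
  define T where "T = {u. B *v axis u 1 = 0}"
  have step: "w \<in> T" if "u \<in> T" "(u, w) \<in> E" for u w
    using kernel_step[OF hH greal gpos hB psd LB, of "axis u 1" u w] that by (simp add: T_def)
  have reach: "x \<in> T" if "(u, x) \<in> E\<^sup>*" "u \<in> T" for u x
    using that by (induction rule: rtrancl_induct) (auto intro: step)
  obtain t where tT: "t \<in> T"
  proof (cases "\<exists>u w. y$u \<noteq> 0 \<and> (u, w) \<in> E")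
    case True
    then obtain u w where "y$u \<noteq> 0" "(u, w) \<in> E" by blast
    then have "w \<in> T"
      using kernel_step[OF hH greal gpos hB psd LB By] by (simp add: T_def)
    then show ?thesis by (rule that)
  next
    case False
    obtain v where yv: "y$v \<noteq> 0" using y0 by (auto simp: vec_eq_iff)
    have Sv: "S = {v}" using False yv unique_sink_noout[OF uniq S, of v] by blast
    have supp: "u = v" if "y$u \<noteq> 0" for u
      using False that unique_sink_noout[OF uniq S, of u] Sv by blast
    have "y = (y$v) *s axis v 1"
      using supp by (auto simp: vec_eq_iff axis_def)
    then have "(y$v) *s (B *v axis v 1) = 0" using By by (metis mv_scale)
    then have "B *v axis v 1 = 0" using yv by (simp add: vec_eq_iff)
    then show ?thesis using that by (simp add: T_def)
  qed
  have "(t, s) \<in> E\<^sup>*" using unique_sink_reach(2)[OF uniq S sS] .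
  then have "s \<in> T" using reach tT by blast
  then show ?thesis by (simp add: T_def)
qed


lemma mscale_add: "mscale a (X + Y) = mscale a X + mscale a Y" by (simp add: vec_eq_iff algebra_simps)
lemma mscale_diff: "mscale a (X - Y) = mscale a X - mscale a Y" by (simp add: vec_eq_iff algebra_simps)
lemma mscale_addl: "mscale (a + b) X = mscale a X + mscale b X" by (simp add: vec_eq_iff algebra_simps)
lemma mscale_mscale: "mscale a (mscale b X) = mscale (a * b) X" by (simp add: vec_eq_iff algebra_simps)
lemma mscale_mult_l: "mscale a X ** Y = mscale a (X ** Y)" by (simp add: vec_eq_iff mmult_nth sum_distrib_left mult.assoc)
lemma mscale_mult_r: "(X::complex^'n::finite^'n) ** mscale a Y = mscale a (X ** Y)"
  by (simp add: vec_eq_iff mmult_nth sum_distrib_left mult_ac)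
lemma mscale_sum: "mscale a (sum f S) = (\<Sum>x\<in>S. mscale a (f x))"
  by (simp add: vec_eq_iff sum_distrib_left)

lemma matrix_add_rdistrib: "((A::complex^'n::finite^'n) + B) ** C = A ** C + B ** C"
  by (simp add: vec_eq_iff mmult_nth sum.distrib algebra_simps)
lemma mat1_diag[simp]: "(mat 1 :: complex^'n::finite^'n) $ i $ i = 1" by (simp add: mat_def)

lemma Lstar_add: "Lstar H E g (X + Y) = Lstar H E g X + Lstar H E g Y"
proof -
  have "\<And>e. mscale (g e) (mscale ((X + Y)$snd e$snd e) (Pr (fst e))
        - mscale (1/2) (Pr (fst e) ** (X + Y) + (X + Y) ** Pr (fst e)))
     = mscale (g e) (mscale (X$snd e$snd e) (Pr (fst e))
        - mscale (1/2) (Pr (fst e) ** X + X ** Pr (fst e)))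
     + mscale (g e) (mscale (Y$snd e$snd e) (Pr (fst e))
        - mscale (1/2) (Pr (fst e) ** Y + Y ** Pr (fst e)))"
    by (simp add: matrix_add_ldistrib matrix_add_rdistrib vec_eq_iff algebra_simps)
  moreover have "mscale \<i> (H ** (X + Y) - (X + Y) ** H) = mscale \<i> (H ** X - X ** H) + mscale \<i> (H ** Y - Y ** H)"
    by (simp add: matrix_add_ldistrib matrix_add_rdistrib vec_eq_iff algebra_simps)
  ultimately show ?thesis unfolding Lstar_def DisS_def by (simp add: sum.distrib algebra_simps)
qed

lemma Lstar_scale: "Lstar H E g (mscale a X) = mscale a (Lstar H E g X)"
proof -
  have "\<And>e. mscale (g e) (mscale ((mscale a X)$snd e$snd e) (Pr (fst e))
        - mscale (1/2) (Pr (fst e) ** (mscale a X) + (mscale a X) ** Pr (fst e)))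
     = mscale a (mscale (g e) (mscale (X$snd e$snd e) (Pr (fst e))
        - mscale (1/2) (Pr (fst e) ** X + X ** Pr (fst e))))"
    by (simp add: mscale_mult_l mscale_mult_r vec_eq_iff algebra_simps)
  moreover have "mscale \<i> (H ** (mscale a X) - (mscale a X) ** H) = mscale a (mscale \<i> (H ** X - X ** H))"
    by (simp add: mscale_mult_l mscale_mult_r vec_eq_iff algebra_simps)
  ultimately show ?thesis unfolding Lstar_def DisS_def by (simp add: mscale_sum mscale_add)
qed

lemma mscale_m1: "mscale (-1) X = - X" by (simp add: vec_eq_iff)

lemma Lstar_diff: "Lstar H E g (X - Y) = Lstar H E g X - Lstar H E g Y"
proof -
  have "Lstar H E g (X - Y) = Lstar H E g (X + mscale (-1) Y)" by (simp add: mscale_m1)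
  also have "\<dots> = Lstar H E g X - Lstar H E g Y" by (simp only: Lstar_add Lstar_scale) (simp add: mscale_m1)
  finally show ?thesis .
qed

lemma Lstar_one: "Lstar H E g (mat 1) = 0"
proof -
  have "H ** mat 1 - mat 1 ** H = 0" by simp
  moreover have "mscale (g e) (mscale ((mat 1::complex^'a^'a)$snd e$snd e) (Pr (fst e))
        - mscale (1/2) (Pr (fst e) ** mat 1 + mat 1 ** Pr (fst e))) = 0" for e
    by (simp add: vec_eq_iff)
  ultimately show ?thesis by (simp add: Lstar_def DisS_def vec_eq_iff)
qed

lemma adjoint_mult: "adjoint (X ** Y) = adjoint Y ** adjoint (X::complex^'n::finite^'n)"
  by (simp add: vec_eq_iff mmult_nth mult.commute)
lemma adjoint_add: "adjoint (X + Y) = adjoint X + adjoint Y" by (simp add: vec_eq_iff)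
lemma adjoint_diff: "adjoint (X - Y) = adjoint X - adjoint Y" by (simp add: vec_eq_iff)
lemma adjoint_scale: "adjoint (mscale a X) = mscale (cnj a) (adjoint X)" by (simp add: vec_eq_iff)
lemma adjoint_sum: "adjoint (sum f S) = (\<Sum>x\<in>S. adjoint (f x))" by (simp add: vec_eq_iff adjoint_def)
lemma adjoint_adjoint: "adjoint (adjoint X) = X" by (simp add: vec_eq_iff)

lemma Lstar_adjoint:
  assumes hH: "hermitian H" and greal: "\<forall>e. cnj (g e) = g e"
  shows "Lstar H E g (adjoint A) = adjoint (Lstar H E g A)"
proof -
  have aH: "adjoint H = H" using hH by (simp add: hermitian_def)
  have "adjoint (Lstar H E g A) = mscale (- \<i>) (adjoint A ** H - H ** adjoint A)
     + (\<Sum>e\<in>E. mscale (g e) (mscale (cnj (A$snd e$snd e)) (Pr (fst e))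
        - mscale (1/2) (adjoint A ** Pr (fst e) + Pr (fst e) ** adjoint A)))"
    unfolding Lstar_def DisS_def adjoint_add adjoint_diff adjoint_scale adjoint_sum adjoint_mult aH adjoint_Pr
    using greal by (simp add: greal[rule_format])
  also have "\<dots> = Lstar H E g (adjoint A)"
    unfolding Lstar_def DisS_def by (simp add: vec_eq_iff algebra_simps)
  finally show ?thesis by simp
qed


lemma ip_self_norm: "Re (ip x x) = (norm x)^2"
proof -
  have "(norm x)^2 = (\<Sum>i\<in>UNIV. (cmod (x$i))^2)"
    unfolding norm_vec_def L2_set_def by (simp add: sum_nonneg)
  then show ?thesis by (simp add: ip_self_Re)
qed

lemma qf_scaleR: "qf B (r *\<^sub>R x) = complex_of_real (r^2) * qf B x"
  unfolding qf_expand vector_scaleR_component unfolding scaleR_conv_of_real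
  by (simp add: sum_distrib_left power2_eq_square mult_ac)

lemma qf_one: "qf (mat 1) x = ip x x" by (simp add: qf_def)

lemma mv_axis: "((B::complex^'n::finite^'m::finite) *v axis j 1) $ i = B$i$j"
  by (simp add: mv_nth axis_def mult_ifz sum.delta)

lemma mat_eq_by_mv: "(\<And>j. (B::complex^'n::finite^'m::finite) *v axis j 1 = 0) \<Longrightarrow> B = 0"
  by (metis mv_axis vec_eq_iff zero_index)

lemma adjoint_one: "adjoint (mat 1 :: complex^'n::finite^'n) = mat 1"
  by (simp add: vec_eq_iff mat_def)

lemma herm_kernel_scalar:
  fixes H A :: "complex^'v::finite^'v" and E :: "('v \<times> 'v) set"
  assumes hH: "hermitian H" and greal: "\<forall>e. cnj (g e) = g e" and gpos: "\<forall>e\<in>E. 0 < Re (g e)"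
    and uniq: "\<exists>!C. condensation_sink E C"
    and hA: "hermitian A" and LA: "Lstar H E g A = 0"
  shows "\<exists>\<mu>::real. A = mscale (complex_of_real \<mu>) (mat 1)"
proof -
  define f where "f x = Re (qf A x)" for x
  have cont: "continuous_on (sphere 0 1) f"
    unfolding f_def qf_expand by (intro continuous_intros)
  have ne: "sphere (0::complex^'v) 1 \<noteq> {}" by simp
  obtain x1 where x1: "x1 \<in> sphere 0 1" and max: "\<And>y. y \<in> sphere 0 1 \<Longrightarrow> f y \<le> f x1"
    using continuous_attains_sup[OF compact_sphere ne cont] by blast
  obtain x2 where x2: "x2 \<in> sphere 0 1" and min: "\<And>y. y \<in> sphere 0 1 \<Longrightarrow> f x2 \<le> f y"
    using continuous_attains_inf[OF compact_sphere ne cont] by blast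
  define \<mu> where "\<mu> = f x1"
  define \<nu> where "\<nu> = f x2"
  have scal: "f x = (norm x)^2 * f ((1 / norm x) *\<^sub>R x)" if "x \<noteq> 0" for x
  proof -
    have "x = norm x *\<^sub>R ((1 / norm x) *\<^sub>R x)" using that by simp
    then have "f x = f (norm x *\<^sub>R ((1 / norm x) *\<^sub>R x))" by simp
    also have "\<dots> = (norm x)^2 * f ((1 / norm x) *\<^sub>R x)"
      unfolding f_def qf_scaleR by simp
    finally show ?thesis .
  qed
  have upper: "f x \<le> \<mu> * (norm x)^2" for x
  proof (cases "x = 0")
    case True then show ?thesis by (simp add: f_def qf_def ip_def)
  next
    case False
    have "(1 / norm x) *\<^sub>R x \<in> sphere 0 1" using False by simp
    then have "f ((1 / norm x) *\<^sub>R x) \<le> \<mu>" using max \<mu>_def by blast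
    then have "(norm x)^2 * f ((1 / norm x) *\<^sub>R x) \<le> (norm x)^2 * \<mu>" by (rule mult_left_mono) simp
    then show ?thesis using scal[OF False] by (simp add: mult.commute)
  qed
  have lower: "\<nu> * (norm x)^2 \<le> f x" for x
  proof (cases "x = 0")
    case True then show ?thesis by (simp add: f_def qf_def ip_def)
  next
    case False
    have "(1 / norm x) *\<^sub>R x \<in> sphere 0 1" using False by simp
    then have "\<nu> \<le> f ((1 / norm x) *\<^sub>R x)" using min \<nu>_def by blast
    then have "(norm x)^2 * \<nu> \<le> (norm x)^2 * f ((1 / norm x) *\<^sub>R x)" by (rule mult_left_mono) simp
    then show ?thesis using scal[OF False] by (simp add: mult.commute)
  qed
  define B1 where "B1 = mscale (complex_of_real \<mu>) (mat 1) - A"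
  define B2 where "B2 = A - mscale (complex_of_real \<nu>) (mat 1)"
  have qB1: "Re (qf B1 x) = \<mu> * (norm x)^2 - f x" for x
    unfolding B1_def qf_diff qf_scale qf_one f_def by (simp add: ip_self_norm)
  have qB2: "Re (qf B2 x) = f x - \<nu> * (norm x)^2" for x
    unfolding B2_def qf_diff qf_scale qf_one f_def by (simp add: ip_self_norm)
  have aA: "adjoint A = A" using hA by (simp add: hermitian_def)
  have hB1: "hermitian B1" unfolding hermitian_def B1_def adjoint_diff adjoint_scale adjoint_one aA by simp
  have hB2: "hermitian B2" unfolding hermitian_def B2_def adjoint_diff adjoint_scale adjoint_one aA by simp
  have pB1: "0 \<le> Re (qf B1 x)" for x using upper[of x] qB1[of x] by simp
  have pB2: "0 \<le> Re (qf B2 x)" for x using lower[of x] qB2[of x] by simp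
  have LB1: "Lstar H E g B1 = 0" unfolding B1_def Lstar_diff Lstar_scale Lstar_one LA
    by (simp add: vec_eq_iff)
  have LB2: "Lstar H E g B2 = 0" unfolding B2_def Lstar_diff Lstar_scale Lstar_one LA
    by (simp add: vec_eq_iff)
  have n1: "norm x1 = 1" using x1 by simp
  have n2: "norm x2 = 1" using x2 by simp
  have K1: "B1 *v x1 = 0" by (rule psd_kernel[OF hB1 pB1]) (simp add: qB1 n1 \<mu>_def)
  have K2: "B2 *v x2 = 0" by (rule psd_kernel[OF hB2 pB2]) (simp add: qB2 n2 \<nu>_def)
  have x10: "x1 \<noteq> 0" using n1 by auto
  have x20: "x2 \<noteq> 0" using n2 by auto
  obtain S where S: "condensation_sink E S" using uniq by blast
  obtain s where sS: "s \<in> S" using unique_sink_reach(1)[OF uniq S] by blast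
  have a1: "B1 *v axis s 1 = 0" by (rule kernel_sink[OF hH greal gpos hB1 pB1 LB1 uniq S K1 x10 sS])
  have a2: "B2 *v axis s 1 = 0" by (rule kernel_sink[OF hH greal gpos hB2 pB2 LB2 uniq S K2 x20 sS])
  have "(B1 *v axis s 1) $ s + (B2 *v axis s 1) $ s = 0" using a1 a2 by simp
  then have "\<mu> = \<nu>" unfolding mv_axis B1_def B2_def by simp
  then have "Re (qf B1 x) = 0" for x using qB1[of x] lower[of x] upper[of x] by simp
  then have "B1 *v x = 0" for x by (rule psd_kernel[OF hB1 pB1])
  then have "B1 = 0" by (intro mat_eq_by_mv)
  then show ?thesis unfolding B1_def by (intro exI[of _ \<mu>]) simp
qed


lemma rank_nullity_eucl:
  fixes f :: "'a::euclidean_space \<Rightarrow> 'b::euclidean_space"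
  assumes lf: "linear f"
  shows "dim {x. f x = 0} + dim (range f) = DIM('a)"
proof -
  define K where "K = {x. f x = 0}"
  define C where "C = {y. \<forall>x\<in>K. orthogonal x y}"
  have sK: "subspace K" unfolding K_def using lf by (rule linear_subspace_kernel)
  have sC: "subspace C" unfolding C_def by (rule subspace_orthogonal_to_vectors)
  have "dim {y \<in> UNIV. \<forall>x\<in>K. orthogonal x y} + dim K = dim (UNIV :: 'a set)"
    by (rule dim_subspace_orthogonal_to_vectors[OF sK subspace_UNIV]) simp
  then have d1: "dim C + dim K = DIM('a)" by (simp add: C_def)
  have rng: "range f = f ` C"
  proof
    show "f ` C \<subseteq> range f" by auto
    show "range f \<subseteq> f ` C"
    proof
      fix z assume "z \<in> range f"
      then obtain x where zx: "z = f x" by auto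
      obtain y w where y: "y \<in> span K" and w: "\<And>u. u \<in> span K \<Longrightarrow> orthogonal w u" and xyw: "x = y + w"
        using orthogonal_subspace_decomp_exists[of K x] by blast
      have "y \<in> K" using y sK by (metis span_eq_iff)
      then have "f y = 0" by (simp add: K_def)
      then have "f x = f w" using xyw linear_add[OF lf] by simp
      moreover have "w \<in> C" unfolding C_def using w span_base by (auto simp: orthogonal_commute)
      ultimately show "z \<in> f ` C" using zx by auto
    qed
  qed
  have inj: "inj_on f (span C)"
  proof (rule inj_onI)
    fix a b assume a: "a \<in> span C" and b: "b \<in> span C" and eq: "f a = f b"
    have aC: "a \<in> C" and bC: "b \<in> C" using a b sC by (metis span_eq_iff)+
    have "f (a - b) = 0" using eq linear_diff[OF lf] by simp
    then have "a - b \<in> K" by (simp add: K_def)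
    moreover have "a - b \<in> C" using aC bC sC by (simp add: subspace_diff)
    ultimately have "orthogonal (a - b) (a - b)" by (simp add: C_def)
    then show "a = b" by (simp only: orthogonal_self) simp
  qed
  have "dim (f ` C) = dim C" by (rule dim_image_eq[OF lf inj])
  then show ?thesis using d1 rng by (simp add: K_def add.commute)
qed


lemma Lstar_kernel:
  fixes H A :: "complex^'v::finite^'v" and E :: "('v \<times> 'v) set"
  assumes hH: "hermitian H" and greal: "\<forall>e. cnj (g e) = g e" and gpos: "\<forall>e\<in>E. 0 < Re (g e)"
    and uniq: "\<exists>!C. condensation_sink E C" and LA: "Lstar H E g A = 0"
  shows "\<exists>a. A = mscale a (mat 1)"
proof -
  define R where "R = mscale (1/2) (A + adjoint A)"
  define J where "J = mscale (- \<i>/2) (A - adjoint A)"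
  have LAd: "Lstar H E g (adjoint A) = 0" using Lstar_adjoint[OF hH greal, where A=A] LA
    by (simp add: vec_eq_iff)
  have hR: "hermitian R" unfolding hermitian_def R_def by (simp add: vec_eq_iff)
  have hJ: "hermitian J" unfolding hermitian_def J_def by (simp add: vec_eq_iff algebra_simps)
  have LR: "Lstar H E g R = 0" unfolding R_def Lstar_scale Lstar_add LA LAd by (simp add: vec_eq_iff)
  have LJ: "Lstar H E g J = 0" unfolding J_def Lstar_scale Lstar_diff LA LAd by (simp add: vec_eq_iff)
  obtain m1 :: real where m1: "R = mscale (complex_of_real m1) (mat 1)"
    using herm_kernel_scalar[OF hH greal gpos uniq hR LR] by blast
  obtain m2 :: real where m2: "J = mscale (complex_of_real m2) (mat 1)"
    using herm_kernel_scalar[OF hH greal gpos uniq hJ LJ] by blast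
  have "A = R + mscale \<i> J" unfolding R_def J_def by (simp add: vec_eq_iff algebra_simps)
  also have "\<dots> = mscale (complex_of_real m1 + \<i> * complex_of_real m2) (mat 1)"
    unfolding m1 m2 by (simp add: vec_eq_iff algebra_simps)
  finally show ?thesis by blast
qed

lemma inner_hs: "inner X Y = Re (hs X Y)"
  by (simp add: inner_vec_def hs_def inner_complex_def Re_sum)

lemma scaleR_mscale: "r *\<^sub>R (X::complex^'n^'n) = mscale (complex_of_real r) X"
  by (simp add: vec_eq_iff vector_scaleR_component del: scaleR_vec_def) (simp add: scaleR_conv_of_real)

lemma Lop_add: "Lop H E g (X + Y) = Lop H E g X + Lop H E g Y"
proof -
  have "\<And>e. mscale (g e) (mscale ((X + Y)$fst e$fst e) (Pr (snd e))
        - mscale (1/2) (Pr (fst e) ** (X + Y) + (X + Y) ** Pr (fst e)))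
     = mscale (g e) (mscale (X$fst e$fst e) (Pr (snd e))
        - mscale (1/2) (Pr (fst e) ** X + X ** Pr (fst e)))
     + mscale (g e) (mscale (Y$fst e$fst e) (Pr (snd e))
        - mscale (1/2) (Pr (fst e) ** Y + Y ** Pr (fst e)))"
    by (simp add: matrix_add_ldistrib matrix_add_rdistrib vec_eq_iff algebra_simps)
  moreover have "mscale (-\<i>) (H ** (X + Y) - (X + Y) ** H) = mscale (-\<i>) (H ** X - X ** H) + mscale (-\<i>) (H ** Y - Y ** H)"
    by (simp add: matrix_add_ldistrib matrix_add_rdistrib vec_eq_iff algebra_simps)
  ultimately show ?thesis unfolding Lop_def Dis_def by (simp add: sum.distrib algebra_simps)
qed

lemma Lop_scale: "Lop H E g (mscale a X) = mscale a (Lop H E g X)"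
proof -
  have "\<And>e. mscale (g e) (mscale ((mscale a X)$fst e$fst e) (Pr (snd e))
        - mscale (1/2) (Pr (fst e) ** (mscale a X) + (mscale a X) ** Pr (fst e)))
     = mscale a (mscale (g e) (mscale (X$fst e$fst e) (Pr (snd e))
        - mscale (1/2) (Pr (fst e) ** X + X ** Pr (fst e))))"
    by (simp add: mscale_mult_l mscale_mult_r vec_eq_iff algebra_simps)
  moreover have "mscale (-\<i>) (H ** (mscale a X) - (mscale a X) ** H) = mscale a (mscale (-\<i>) (H ** X - X ** H))"
    by (simp add: mscale_mult_l mscale_mult_r vec_eq_iff algebra_simps)
  ultimately show ?thesis unfolding Lop_def Dis_def by (simp add: mscale_sum mscale_add)
qed

lemma linear_Lop: "linear (Lop H E g)"
  by (rule linearI) (simp_all add: Lop_add scaleR_mscale Lop_scale)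

lemma Lop_kernel_dim:
  fixes H :: "complex^'v::finite^'v" and E :: "('v \<times> 'v) set"
  assumes hH: "hermitian H" and greal: "\<forall>e. cnj (g e) = g e" and gpos: "\<forall>e\<in>E. 0 < Re (g e)"
    and uniq: "\<exists>!C. condensation_sink E C"
  shows "dim {X. Lop H E g X = 0} \<le> 2"
proof -
  let ?T = "Lop H E g"
  define A2 where "A2 = span {mat 1 :: complex^'v^'v, mscale \<i> (mat 1)}"
  define W where "W = {Y. \<forall>X\<in>A2. orthogonal X Y}"
  have sA2: "subspace A2" unfolding A2_def by simp
  have dA2: "dim A2 \<le> 2"
  proof -
    have "dim {mat 1 :: complex^'v^'v, mscale \<i> (mat 1)} \<le> card {mat 1 :: complex^'v^'v, mscale \<i> (mat 1)}"
      by (rule dim_le_card) (auto intro: span_base)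
    moreover have "card {mat 1 :: complex^'v^'v, mscale \<i> (mat 1)} \<le> 2" by (simp add: card_insert_if)
    ultimately show ?thesis unfolding A2_def dim_span by linarith
  qed
  have "dim {y \<in> UNIV. \<forall>x\<in>A2. orthogonal x y} + dim A2 = dim (UNIV :: (complex^'v^'v) set)"
    by (rule dim_subspace_orthogonal_to_vectors[OF sA2 subspace_UNIV]) simp
  then have dW: "dim W + dim A2 = DIM(complex^'v^'v)" by (simp add: W_def)
  have srng: "subspace (range ?T)" by (rule linear_subspace_image[OF linear_Lop subspace_UNIV])
  have WT: "W \<subseteq> range ?T"
  proof
    fix Y assume YW: "Y \<in> W"
    obtain p q where p: "p \<in> span (range ?T)" and q: "\<And>u. u \<in> span (range ?T) \<Longrightarrow> orthogonal q u"
      and Ypq: "Y = p + q"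
      using orthogonal_subspace_decomp_exists[of "range ?T" Y] by blast
    have "inner q (?T X) = 0" for X
    proof -
      have "?T X \<in> span (range ?T)" by (rule span_base) simp
      then show ?thesis using q by (simp add: orthogonal_def)
    qed
    then have "Re (hs (Lstar H E g q) X) = 0" for X
      by (simp add: inner_hs hs_L[OF hH greal])
    then have "inner (Lstar H E g q) (Lstar H E g q) = 0" by (simp add: inner_hs)
    then have "Lstar H E g q = 0" by simp
    then obtain a where qa: "q = mscale a (mat 1)" using Lstar_kernel[OF hH greal gpos uniq] by blast
    have "q = Re a *\<^sub>R mat 1 + Im a *\<^sub>R mscale \<i> (mat 1)"
    proof -
      have ae: "a = complex_of_real (Re a) + \<i> * complex_of_real (Im a)" by (simp add: complex_eq_iff)
      have "q = mscale (complex_of_real (Re a)) (mat 1) + mscale (complex_of_real (Im a)) (mscale \<i> (mat 1))"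
        unfolding qa by (subst (1) ae) (simp add: vec_eq_iff algebra_simps)
      then show ?thesis by (simp add: scaleR_mscale)
    qed
    then have "q \<in> A2" unfolding A2_def
      by (metis span_add span_mul insertI1 insertI2 span_base)
    then have "orthogonal q Y" using YW by (simp add: W_def)
    moreover have "orthogonal q p" using q[OF p] .
    ultimately have "inner q q = 0" using Ypq by (simp add: orthogonal_def inner_add_right)
    then have "q = 0" by simp
    then have "Y = p" using Ypq by simp
    then show "Y \<in> range ?T" using p srng by (metis span_eq_iff)
  qed
  have "dim W \<le> dim (range ?T)" by (rule dim_subset[OF WT])
  moreover have "dim {X. ?T X = 0} + dim (range ?T) = DIM(complex^'v^'v)"
    by (rule rank_nullity_eucl[OF linear_Lop])
  ultimately show ?thesis using dW dA2 by linarith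
qed


lemma trace_nonzero_diag:
  assumes "mtrace (X::complex^'v::finite^'v) = 1"
  obtains j where "X$j$j \<noteq> 0"
proof -
  have "\<exists>j. X$j$j \<noteq> 0"
  proof (rule ccontr)
    assume "\<not> (\<exists>j. X$j$j \<noteq> 0)"
    then have "mtrace X = 0" by (simp add: mtrace_def)
    with assms show False by simp
  qed
  then show ?thesis using that by blast
qed

lemma uniq_stationary:
  fixes H \<rho>1 \<rho>2 :: "complex^'v::finite^'v" and E :: "('v \<times> 'v) set"
  assumes hH: "hermitian H" and greal: "\<forall>e. cnj (g e) = g e" and gpos: "\<forall>e\<in>E. 0 < Re (g e)"
    and uniq: "\<exists>!C. condensation_sink E C"
    and d1: "density_matrix \<rho>1" and d2: "density_matrix \<rho>2"
    and L1: "Lop H E g \<rho>1 = 0" and L2: "Lop H E g \<rho>2 = 0"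
  shows "\<rho>1 = \<rho>2"
proof -
  let ?K = "{X. Lop H E g X = 0}"
  let ?i1 = "mscale \<i> \<rho>1"
  have sK: "subspace ?K" by (rule linear_subspace_kernel[OF linear_Lop])
  have i1K: "?i1 \<in> ?K" using L1 by (simp add: Lop_scale vec_eq_iff)
  obtain j where dj: "\<rho>1$j$j \<noteq> 0" using d1 trace_nonzero_diag unfolding density_matrix_def by blast
  have h1: "cnj (\<rho>1$j$j) = \<rho>1$j$j" using d1 unfolding density_matrix_def
    by (metis adjoint_nth hermitian_def)
  have h2: "cnj (\<rho>2$j$j) = \<rho>2$j$j" using d2 unfolding density_matrix_def
    by (metis adjoint_nth hermitian_def)
  have i10: "?i1 \<noteq> 0" using dj by (auto simp: vec_eq_iff)
  have nsp: "\<rho>1 \<notin> span {?i1}"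
  proof
    assume "\<rho>1 \<in> span {?i1}"
    then obtain k where eq: "\<rho>1 = k *\<^sub>R ?i1" by (auto simp: span_singleton)
    have "\<rho>1$j$j = (k *\<^sub>R ?i1)$j$j" using arg_cong[OF eq, of "\<lambda>X. X$j$j"] .
    then have "\<rho>1$j$j = complex_of_real k * \<i> * \<rho>1$j$j" by (simp add: scaleR_mscale)
    then have "1 = complex_of_real k * \<i>" using dj by (metis mult_cancel_right2)
    then show False by (simp add: complex_eq_iff)
  qed
  have dim2: "dim {\<rho>1, ?i1} = 2" using nsp i10 by (simp add: dim_insert)
  have "dim ?K \<le> 2" by (rule Lop_kernel_dim[OF hH greal gpos uniq])
  then have "span {\<rho>1, ?i1} = span ?K"
    using L1 i1K dim2 by (intro dim_eq_span) auto
  moreover have "\<rho>2 \<in> span ?K" by (rule span_base) (simp add: L2)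
  ultimately have "\<rho>2 \<in> span {\<rho>1, ?i1}" by simp
  then obtain k where "\<rho>2 - k *\<^sub>R \<rho>1 \<in> span {?i1}" by (auto simp: span_breakdown_eq)
  then obtain l where "\<rho>2 - k *\<^sub>R \<rho>1 = l *\<^sub>R ?i1" by (auto simp: span_singleton)
  then have r2: "\<rho>2 = mscale (complex_of_real k + complex_of_real l * \<i>) \<rho>1"
    by (simp add: scaleR_mscale vec_eq_iff algebra_simps)
  have "\<rho>2$j$j = (complex_of_real k + complex_of_real l * \<i>) * \<rho>1$j$j" using r2 by simp
  then have "cnj ((complex_of_real k + complex_of_real l * \<i>) * \<rho>1$j$j) = (complex_of_real k + complex_of_real l * \<i>) * \<rho>1$j$j"
    using h2 by simp
  then have "(complex_of_real k - complex_of_real l * \<i>) * \<rho>1$j$j = (complex_of_real k + complex_of_real l * \<i>) * \<rho>1$j$j"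
    using h1 by simp
  then have "complex_of_real k - complex_of_real l * \<i> = complex_of_real k + complex_of_real l * \<i>"
    using dj by simp
  then have l0: "l = 0" by (simp add: complex_eq_iff)
  have "mtrace \<rho>2 = complex_of_real k * mtrace \<rho>1" using r2 l0 by (simp add: mtrace_def sum_distrib_left)
  then have "k = 1" using d1 d2 unfolding density_matrix_def by simp
  then show ?thesis using r2 l0 by (simp add: vec_eq_iff)
qed


definition Dsum :: "('v::finite \<times> 'v) set \<Rightarrow> ('v \<times> 'v \<Rightarrow> complex) \<Rightarrow> complex^'v^'v" where
  "Dsum E g = (\<Sum>e\<in>E. mscale (g e) (Pr (fst e)))"

definition Gm where "Gm H E g = mscale (- \<i>) H - mscale (1/2) (Dsum E g)"

definition Jump :: "('v::finite \<times> 'v) set \<Rightarrow> ('v \<times> 'v \<Rightarrow> complex) \<Rightarrow> complex^'v^'v \<Rightarrow> complex^'v^'v" where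
  "Jump E g \<rho> = (\<Sum>e\<in>E. mscale (g e * \<rho>$fst e$fst e) (Pr (snd e)))"

definition Psi where
  "Psi H E g (\<epsilon>::real) \<rho> = (mat 1 + mscale (complex_of_real \<epsilon>) (Gm H E g)) ** \<rho> ** adjoint (mat 1 + mscale (complex_of_real \<epsilon>) (Gm H E g))
     + mscale (complex_of_real \<epsilon>) (Jump E g \<rho>)"

lemma sum_mmult_l: "(sum f S) ** (X::complex^'n::finite^'n) = (\<Sum>x\<in>S. f x ** X)"
  by (simp add: vec_eq_iff mmult_nth sum_distrib_right sum.swap[of _ S])
lemma sum_mmult_r: "(X::complex^'n::finite^'n) ** (sum f S) = (\<Sum>x\<in>S. X ** f x)"
  by (simp add: vec_eq_iff mmult_nth sum_distrib_left sum.swap[of _ S])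
lemma matrix_diff_ldistrib: "(X::complex^'n::finite^'n) ** (A - B) = X ** A - X ** B"
  by (simp add: vec_eq_iff mmult_nth sum_subtractf algebra_simps)
lemma matrix_diff_rdistrib: "((A::complex^'n::finite^'n) - B) ** X = A ** X - B ** X"
  by (simp add: vec_eq_iff mmult_nth sum_subtractf algebra_simps)

lemma adjoint_Dsum: assumes "\<forall>e. cnj (g e) = g e" shows "adjoint (Dsum E g) = Dsum E g"
  by (simp add: Dsum_def adjoint_sum adjoint_scale assms[rule_format])

lemma adjoint_Gm:
  assumes "hermitian H" "\<forall>e. cnj (g e) = g e"
  shows "adjoint (Gm H E g) = mscale \<i> H - mscale (1/2) (Dsum E g)"
  using assms by (simp add: Gm_def adjoint_diff adjoint_scale adjoint_Dsum hermitian_def)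

lemma G_rho: "Gm H E g ** \<rho> = mscale (- \<i>) (H ** \<rho>) - mscale (1/2) (\<Sum>e\<in>E. mscale (g e) (Pr (fst e) ** \<rho>))"
  by (simp add: Gm_def Dsum_def matrix_diff_rdistrib mscale_mult_l sum_mmult_l)

lemma rho_G:
  assumes "hermitian H" "\<forall>e. cnj (g e) = g e"
  shows "\<rho> ** adjoint (Gm H E g) = mscale \<i> (\<rho> ** H) - mscale (1/2) (\<Sum>e\<in>E. mscale (g e) (\<rho> ** Pr (fst e)))"
  by (simp add: adjoint_Gm[OF assms] Dsum_def matrix_diff_ldistrib mscale_mult_r sum_mmult_r)

lemma Lop_split:
  assumes "hermitian H" "\<forall>e. cnj (g e) = g e"
  shows "Lop H E g \<rho> = Gm H E g ** \<rho> + \<rho> ** adjoint (Gm H E g) + Jump E g \<rho>"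
  unfolding G_rho rho_G[OF assms] Lop_def Dis_def Jump_def
  by (simp add: vec_eq_iff algebra_simps sum.distrib sum_subtractf sum_distrib_left)

lemma Psi_expand:
  assumes "hermitian H" "\<forall>e. cnj (g e) = g e"
  shows "Psi H E g \<epsilon> \<rho> = \<rho> + mscale (complex_of_real \<epsilon>) (Lop H E g \<rho>)
     + mscale (complex_of_real (\<epsilon>^2)) (Gm H E g ** \<rho> ** adjoint (Gm H E g))"
proof -
  let ?G = "Gm H E g" and ?e = "complex_of_real \<epsilon>"
  have "(mat 1 + mscale ?e ?G) ** \<rho> ** adjoint (mat 1 + mscale ?e ?G)
      = \<rho> + mscale ?e (?G ** \<rho> + \<rho> ** adjoint ?G) + mscale (?e * ?e) (?G ** \<rho> ** adjoint ?G)"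
    by (simp add: adjoint_add adjoint_scale adjoint_one matrix_add_ldistrib matrix_add_rdistrib
        mscale_mult_l mscale_mult_r matrix_mul_assoc vec_eq_iff algebra_simps)
  then show ?thesis unfolding Psi_def Lop_split[OF assms]
    by (simp add: vec_eq_iff algebra_simps power2_eq_square)
qed


lemma psd_qf: "positive_semidef B \<longleftrightarrow> (\<forall>x. 0 \<le> Re (qf B x))"
  by (simp add: positive_semidef_def qf_def ip_def)

lemma ip_axis: "ip (axis i 1) v = v$i"
proof -
  have "ip (axis i 1) v = (\<Sum>k\<in>UNIV. if k = i then v$k else 0)"
    unfolding ip_def by (intro sum.cong) (auto simp: axis_def)
  then show ?thesis by (simp add: sum.delta)
qed

lemma zcz: "z * cnj z = complex_of_real (cmod z) * complex_of_real (cmod z)"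
  using complex_norm_square[of z] by (simp add: power2_eq_square)

lemma qf_two:
  "qf B (a + b) = qf B a + qf B b + ip a (B *v b) + ip b (B *v a)"
  by (simp add: qf_def mv_add ip_add_left ip_add_right)

lemma offdiag_bound:
  assumes hB: "hermitian B" and psd: "\<And>x. 0 \<le> Re (qf B x)"
  shows "2 * cmod (B$i$j) \<le> Re (B$i$i) + Re (B$j$j)"
proof (cases "B$i$j = 0")
  case True
  have "0 \<le> Re (B$i$i)" "0 \<le> Re (B$j$j)" using psd[of "axis i 1"] psd[of "axis j 1"] by (simp_all add: qf_axis)
  then show ?thesis using True by simp
next
  case False
  define t where "t = - cnj (B$i$j) / complex_of_real (cmod (B$i$j))"
  have Bji: "B$j$i = cnj (B$i$j)" using hB by (metis adjoint_nth hermitian_def)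
  have tt: "cnj t * t = 1" using False unfolding t_def
    by (simp add: complex_norm_square[symmetric] field_simps power2_eq_square)
  have tB: "t * B$i$j = - complex_of_real (cmod (B$i$j))" using False unfolding t_def
    by (simp add: field_simps zcz)
  let ?x = "axis i 1 + t *s axis j 1"
  have "qf B ?x = B$i$i + cnj t * t * B$j$j + t * B$i$j + cnj (t * B$i$j)"
    unfolding qf_two qf_axis
    by (simp add: qf_def mv_scale ip_scale_left ip_scale_right ip_axis mv_axis qf_axis[unfolded qf_def] Bji algebra_simps)
  also have "\<dots> = B$i$i + B$j$j - 2 * complex_of_real (cmod (B$i$j))" unfolding tt tB by simp
  finally have "Re (qf B ?x) = Re (B$i$i) + Re (B$j$j) - 2 * cmod (B$i$j)" by simp
  then show ?thesis using psd[of ?x] by simp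
qed

lemma dm_entry_bound:
  assumes "density_matrix (B::complex^'v::finite^'v)"
  shows "cmod (B$i$j) \<le> 1"
proof -
  have hB: "hermitian B" and psd: "\<And>x. 0 \<le> Re (qf B x)" and tr: "mtrace B = 1"
    using assms by (auto simp: density_matrix_def psd_qf)
  have d0: "0 \<le> Re (B$k$k)" for k using psd[of "axis k 1"] by (simp add: qf_axis)
  have "(\<Sum>k\<in>UNIV. Re (B$k$k)) = 1" using tr by (simp add: mtrace_def flip: Re_sum)
  then have d1: "Re (B$k$k) \<le> 1" for k using member_le_sum[of k UNIV "\<lambda>k. Re (B$k$k)"] d0 by simp
  show ?thesis using offdiag_bound[OF hB psd, of i j] d1[of i] d1[of j] by simp
qed

lemma dm_bounded: "bounded {B :: complex^'v::finite^'v. density_matrix B}"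
proof -
  have "norm B \<le> real (CARD('v)) * real (CARD('v))" if "density_matrix B" for B :: "complex^'v^'v"
  proof -
    have "norm B \<le> (\<Sum>i\<in>UNIV. norm (B$i))"
      unfolding norm_vec_def by (rule L2_set_le_sum) simp
    also have "\<dots> \<le> (\<Sum>i\<in>UNIV. \<Sum>j\<in>UNIV. cmod (B$i$j))"
      by (intro sum_mono) (unfold norm_vec_def, rule L2_set_le_sum, simp)
    also have "\<dots> \<le> (\<Sum>i\<in>(UNIV::'v set). \<Sum>j\<in>(UNIV::'v set). 1)"
      by (intro sum_mono dm_entry_bound that)
    finally show ?thesis by simp
  qed
  then show ?thesis unfolding bounded_iff by blast
qed

lemma cont_adjoint: "continuous_on S (adjoint :: complex^'v::finite^'v \<Rightarrow> _)"
  unfolding adjoint_def by (intro continuous_intros)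

lemma cont_qf: "continuous_on S (\<lambda>B. qf B x)"
  unfolding qf_expand by (intro continuous_intros)

lemma cont_mtrace: "continuous_on S (mtrace :: complex^'v::finite^'v \<Rightarrow> _)"
  unfolding mtrace_def by (intro continuous_intros)

lemma dm_closed: "closed {B :: complex^'v::finite^'v. density_matrix B}"
proof -
  have eq: "{B :: complex^'v^'v. density_matrix B} =
      {B. adjoint B = B} \<inter> (\<Inter>x\<in>UNIV. {B. 0 \<le> Re (qf B x)}) \<inter> {B. mtrace B = 1}"
    by (auto simp: density_matrix_def hermitian_def psd_qf)
  show ?thesis unfolding eq
    by (intro closed_Int closed_INT ballI closed_Collect_eq closed_Collect_le cont_adjoint
        continuous_on_id continuous_on_const continuous_on_Re cont_qf cont_mtrace)
qed

lemma dm_compact: "compact {B :: complex^'v::finite^'v. density_matrix B}"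
  by (simp add: compact_eq_bounded_closed dm_bounded dm_closed)

lemma mtrace_add: "mtrace (X + Y) = mtrace X + mtrace Y" by (simp add: mtrace_def sum.distrib)
lemma mtrace_scale: "mtrace (mscale a X) = a * mtrace X" by (simp add: mtrace_def sum_distrib_left)

lemma dm_convex: "convex {B :: complex^'v::finite^'v. density_matrix B}"
proof (rule convexI)
  fix x y :: "complex^'v^'v" and u v :: real
  assume x: "x \<in> {B. density_matrix B}" and y: "y \<in> {B. density_matrix B}" and u: "0 \<le> u" and v: "0 \<le> v" and uv: "u + v = 1"
  have hx: "adjoint x = x" and hy: "adjoint y = y" using x y by (auto simp: density_matrix_def hermitian_def)
  have px: "0 \<le> Re (qf x z)" and py: "0 \<le> Re (qf y z)" for z using x y by (auto simp: density_matrix_def psd_qf)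
  have tx: "mtrace x = 1" and ty: "mtrace y = 1" using x y by (auto simp: density_matrix_def)
  have "hermitian (u *\<^sub>R x + v *\<^sub>R y)"
    unfolding hermitian_def scaleR_mscale adjoint_add adjoint_scale hx hy by simp
  moreover have "0 \<le> Re (qf (u *\<^sub>R x + v *\<^sub>R y) z)" for z
    unfolding scaleR_mscale qf_add qf_scale using px[of z] py[of z] u v by simp
  moreover have "mtrace (u *\<^sub>R x + v *\<^sub>R y) = 1"
    unfolding scaleR_mscale mtrace_add mtrace_scale tx ty using uv by (simp flip: of_real_add)
  ultimately show "u *\<^sub>R x + v *\<^sub>R y \<in> {B. density_matrix B}"
    by (simp add: density_matrix_def psd_qf)
qed

lemma Pr_dm: "density_matrix (Pr s :: complex^'v::finite^'v)"
proof -
  have "hermitian (Pr s)" by (simp add: hermitian_def)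
  moreover have "0 \<le> Re (qf (Pr s) x)" for x by (simp add: qf_Pr Re_cnj_self)
  moreover have "mtrace (Pr s) = 1" by (simp add: mtrace_def sum.delta)
  ultimately show ?thesis by (simp add: density_matrix_def psd_qf)
qed


lemma ip_adj: "ip x ((A::complex^'n::finite^'n) *v y) = ip (adjoint A *v x) y"
proof -
  have "ip x (A *v y) = (\<Sum>i\<in>UNIV. \<Sum>j\<in>UNIV. cnj (x$i) * A$i$j * y$j)"
    by (simp add: ip_def mv_nth sum_distrib_left mult.assoc)
  also have "\<dots> = (\<Sum>j\<in>UNIV. \<Sum>i\<in>UNIV. cnj (x$i) * A$i$j * y$j)"
    by (rule sum.swap)
  also have "\<dots> = ip (adjoint A *v x) y"
    by (simp add: ip_def mv_nth sum_distrib_right sum_distrib_left mult_ac)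
  finally show ?thesis .
qed

lemma qf_sandwich: "qf (A ** \<rho> ** adjoint A) x = qf \<rho> (adjoint A *v x)"
  by (simp add: qf_def ip_adj flip: matrix_vector_mul_assoc)

lemma herm_sandwich: "hermitian \<rho> \<Longrightarrow> hermitian (A ** \<rho> ** adjoint A)"
  by (simp add: hermitian_def adjoint_mult adjoint_adjoint matrix_mul_assoc)

lemma hs_one: "hs (mat 1) X = mtrace X"
proof -
  have "hs (mat 1) X = (\<Sum>i\<in>UNIV. \<Sum>j\<in>UNIV. if j = i then X$i$j else 0)"
    unfolding hs_def by (intro sum.cong refl) (auto simp: mat_def)
  then show ?thesis by (simp add: mtrace_def sum.delta)
qed

lemma hs_zero_left: "hs 0 X = 0" by (simp add: hs_def)

lemma mtrace_Lop:
  assumes "hermitian H" "\<forall>e. cnj (g e) = g e"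
  shows "mtrace (Lop H E g X) = 0"
  unfolding hs_one[symmetric] hs_L[OF assms] Lstar_one hs_zero_left ..

lemma mtrace_herm_real: "hermitian X \<Longrightarrow> cnj (mtrace X) = mtrace X"
  by (simp add: mtrace_def herm_diag_real)

lemma mtrace_qf: "mtrace X = (\<Sum>i\<in>UNIV. qf X (axis i 1))"
  by (simp add: mtrace_def qf_axis)

lemma mtrace_psd: "(\<And>x. 0 \<le> Re (qf X x)) \<Longrightarrow> 0 \<le> Re (mtrace X)"
  unfolding mtrace_qf Re_sum by (simp add: sum_nonneg)

lemma real_cplx: "cnj a = a \<Longrightarrow> a = complex_of_real (Re a)"
  by (simp add: complex_eq_iff)

lemma Jump_herm:
  assumes "\<forall>e. cnj (g e) = g e" "hermitian \<rho>"
  shows "hermitian (Jump E g \<rho>)"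
  unfolding hermitian_def Jump_def adjoint_sum adjoint_scale adjoint_Pr
  using assms herm_diag_real[OF assms(2)] by (simp add: assms(1)[rule_format])

lemma Jump_psd:
  assumes greal: "\<forall>e. cnj (g e) = g e" and gpos: "\<forall>e\<in>E. 0 < Re (g e)"
    and h: "hermitian \<rho>" and p: "\<And>x. 0 \<le> Re (qf \<rho> x)"
  shows "0 \<le> Re (qf (Jump E g \<rho>) x)"
proof -
  have "qf (Jump E g \<rho>) x = (\<Sum>e\<in>E. g e * \<rho>$fst e$fst e * (cnj (x$snd e) * x$snd e))"
    unfolding Jump_def qf_sum qf_scale qf_Pr ..
  moreover have "0 \<le> Re (g e * \<rho>$fst e$fst e * (cnj (x$snd e) * x$snd e))" if "e \<in> E" for e
  proof -
    have "g e = complex_of_real (Re (g e))" using real_cplx greal by blast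
    moreover have "\<rho>$fst e$fst e = complex_of_real (Re (\<rho>$fst e$fst e))"
      using real_cplx herm_diag_real[OF h] by blast
    moreover have "cnj (x$snd e) * x$snd e = complex_of_real ((cmod (x$snd e))^2)"
      by (simp add: zcz mult.commute power2_eq_square)
    moreover have "0 \<le> Re (\<rho>$fst e$fst e)" using p[of "axis (fst e) 1"] by (simp add: qf_axis)
    ultimately show ?thesis using gpos that
      by (metis Re_complex_of_real less_eq_real_def mult_nonneg_nonneg of_real_mult zero_le_power2)
  qed
  ultimately show ?thesis by (simp add: Re_sum sum_nonneg)
qed


definition tau where "tau H E g \<rho> = mtrace (Gm H E g ** \<rho> ** adjoint (Gm H E g))"

definition Zf where "Zf H E g \<rho> = Re (tau H E g \<rho>) *\<^sub>R \<rho> - Gm H E g ** \<rho> ** adjoint (Gm H E g)"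

definition Phi where "Phi H E g \<epsilon> \<rho> = (1 / Re (mtrace (Psi H E g \<epsilon> \<rho>))) *\<^sub>R Psi H E g \<epsilon> \<rho>"

context
  fixes H :: "complex^'v::finite^'v" and E :: "('v \<times> 'v) set" and g
  assumes hH: "hermitian H" and greal: "\<forall>e. cnj (g e) = g e" and gpos: "\<forall>e\<in>E. 0 < Re (g e)"
begin

lemma herm_add: "hermitian X \<Longrightarrow> hermitian Y \<Longrightarrow> hermitian (X + Y)"
  by (simp add: hermitian_def adjoint_add)
lemma herm_scale: "hermitian X \<Longrightarrow> hermitian (mscale (complex_of_real r) X)"
  by (simp add: hermitian_def adjoint_scale)

lemma Psi_herm: "hermitian \<rho> \<Longrightarrow> hermitian (Psi H E g \<epsilon> \<rho>)"
  unfolding Psi_def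
  by (intro herm_add herm_scale herm_sandwich Jump_herm[OF greal])

lemma Psi_psd:
  assumes "hermitian \<rho>" "\<And>x. 0 \<le> Re (qf \<rho> x)" "0 \<le> \<epsilon>"
  shows "0 \<le> Re (qf (Psi H E g \<epsilon> \<rho>) x)"
proof -
  have "0 \<le> Re (qf \<rho> (adjoint (mat 1 + mscale (complex_of_real \<epsilon>) (Gm H E g)) *v x))" by (rule assms(2))
  moreover have "0 \<le> Re (qf (Jump E g \<rho>) x)" by (rule Jump_psd[OF greal gpos assms(1,2)])
  ultimately show ?thesis unfolding Psi_def qf_add qf_scale qf_sandwich using assms(3) by simp
qed

lemma tau_real: "hermitian \<rho> \<Longrightarrow> tau H E g \<rho> = complex_of_real (Re (tau H E g \<rho>))"
  unfolding tau_def by (rule real_cplx, rule mtrace_herm_real, rule herm_sandwich)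

lemma tau_nonneg: "(\<And>x. 0 \<le> Re (qf \<rho> x)) \<Longrightarrow> 0 \<le> Re (tau H E g \<rho>)"
  unfolding tau_def by (rule mtrace_psd) (simp add: qf_sandwich)

lemma Psi_trace:
  "mtrace (Psi H E g \<epsilon> \<rho>) = mtrace \<rho> + complex_of_real (\<epsilon>^2) * tau H E g \<rho>"
  unfolding Psi_expand[OF hH greal] mtrace_add mtrace_scale mtrace_Lop[OF hH greal] tau_def by simp

lemma Psi_trace_dm:
  assumes "density_matrix \<rho>"
  shows "Re (mtrace (Psi H E g \<epsilon> \<rho>)) = 1 + \<epsilon>^2 * Re (tau H E g \<rho>)"
    and "mtrace (Psi H E g \<epsilon> \<rho>) = complex_of_real (Re (mtrace (Psi H E g \<epsilon> \<rho>)))"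
    and "1 \<le> Re (mtrace (Psi H E g \<epsilon> \<rho>))"
proof -
  have h: "hermitian \<rho>" and p: "\<And>x. 0 \<le> Re (qf \<rho> x)" and t: "mtrace \<rho> = 1"
    using assms by (auto simp: density_matrix_def psd_qf)
  show 1: "Re (mtrace (Psi H E g \<epsilon> \<rho>)) = 1 + \<epsilon>^2 * Re (tau H E g \<rho>)"
    unfolding Psi_trace t by simp
  show "mtrace (Psi H E g \<epsilon> \<rho>) = complex_of_real (Re (mtrace (Psi H E g \<epsilon> \<rho>)))"
    unfolding 1 unfolding Psi_trace t by (subst tau_real[OF h]) simp
  show "1 \<le> Re (mtrace (Psi H E g \<epsilon> \<rho>))" unfolding 1 using tau_nonneg[OF p] by simp
qed

lemma Phi_dm:
  assumes "density_matrix \<rho>" "0 \<le> \<epsilon>"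
  shows "density_matrix (Phi H E g \<epsilon> \<rho>)"
proof -
  have h: "hermitian \<rho>" and p: "\<And>x. 0 \<le> Re (qf \<rho> x)"
    using assms by (auto simp: density_matrix_def psd_qf)
  let ?t = "Re (mtrace (Psi H E g \<epsilon> \<rho>))"
  have t1: "1 \<le> ?t" by (rule Psi_trace_dm(3)[OF assms(1)])
  have "hermitian (Phi H E g \<epsilon> \<rho>)"
    using Psi_herm[OF h] unfolding Phi_def hermitian_def scaleR_mscale adjoint_scale by simp
  moreover have "0 \<le> Re (qf (Phi H E g \<epsilon> \<rho>) x)" for x
    unfolding Phi_def scaleR_mscale qf_scale using Psi_psd[OF h p assms(2), of x] t1 by simp
  moreover have "mtrace (Phi H E g \<epsilon> \<rho>) = 1"
    unfolding Phi_def scaleR_mscale mtrace_scale using t1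
    by (subst Psi_trace_dm(2)[OF assms(1)]) (simp flip: of_real_mult)
  ultimately show ?thesis by (simp add: density_matrix_def psd_qf)
qed

lemma linear_Psi: "linear (Psi H E g \<epsilon>)"
proof (rule linearI)
  fix x y show "Psi H E g \<epsilon> (x + y) = Psi H E g \<epsilon> x + Psi H E g \<epsilon> y"
    unfolding Psi_expand[OF hH greal] Lop_add
    by (simp add: mscale_add matrix_add_ldistrib matrix_add_rdistrib algebra_simps)
next
  fix r x show "Psi H E g \<epsilon> (r *\<^sub>R x) = r *\<^sub>R Psi H E g \<epsilon> x"
    unfolding Psi_expand[OF hH greal] scaleR_mscale Lop_scale
    by (simp add: mscale_add mscale_mult_l mscale_mult_r mscale_mscale mult.commute)
qed

lemma cont_linear: "linear (f :: complex^'v^'v \<Rightarrow> complex^'v^'v) \<Longrightarrow> continuous_on S f"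
  by (rule linear_continuous_on) (simp add: linear_conv_bounded_linear)

lemma cont_Phi: "continuous_on {B. density_matrix B} (Phi H E g \<epsilon>)"
proof -
  have cP: "continuous_on {B. density_matrix B} (\<lambda>x. Psi H E g \<epsilon> x)" by (rule cont_linear[OF linear_Psi])
  have cT: "continuous_on {B. density_matrix B} (\<lambda>x. Re (mtrace (Psi H E g \<epsilon> x)))"
    unfolding mtrace_def by (intro continuous_intros cP)
  have cM: "continuous_on {B. density_matrix B} (\<lambda>x. mtrace (Psi H E g \<epsilon> x))"
    unfolding mtrace_def by (intro continuous_intros cP)
  show ?thesis unfolding Phi_def
  proof (intro continuous_intros cP cM ballI)
    fix x :: "complex^'v^'v" assume "x \<in> {B. density_matrix B}"
    then have "1 \<le> Re (mtrace (Psi H E g \<epsilon> x))" using Psi_trace_dm(3) by blast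
    then show "Re (mtrace (Psi H E g \<epsilon> x)) \<noteq> 0" by simp
  qed
qed

lemma Phi_fix:
  assumes "density_matrix \<rho>" "0 < \<epsilon>" "Phi H E g \<epsilon> \<rho> = \<rho>"
  shows "Lop H E g \<rho> = \<epsilon> *\<^sub>R Zf H E g \<rho>"
proof -
  let ?t = "Re (mtrace (Psi H E g \<epsilon> \<rho>))"
  let ?G = "Gm H E g ** \<rho> ** adjoint (Gm H E g)"
  have t1: "1 \<le> ?t" by (rule Psi_trace_dm(3)[OF assms(1)])
  have "Psi H E g \<epsilon> \<rho> = ?t *\<^sub>R \<rho>"
    using assms(3) t1 unfolding Phi_def by (metis divide_eq_0_iff not_one_le_zero real_scaleR_def
        scaleR_cancel_left scaleR_one scaleR_scaleR nonzero_divide_eq_eq mult.commute zero_neq_one)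
  then have e1: "Psi H E g \<epsilon> \<rho> = (1 + \<epsilon>^2 * Re (tau H E g \<rho>)) *\<^sub>R \<rho>"
    by (simp only: Psi_trace_dm(1)[OF assms(1)])
  then have e2: "\<rho> + mscale (complex_of_real \<epsilon>) (Lop H E g \<rho>) + mscale (complex_of_real (\<epsilon>^2)) ?G
      = mscale (complex_of_real (1 + \<epsilon>^2 * Re (tau H E g \<rho>))) \<rho>"
    by (simp only: Psi_expand[OF hH greal] scaleR_mscale)
  have "Lop H E g \<rho> $i$j = (\<epsilon> *\<^sub>R Zf H E g \<rho>)$i$j" for i j
  proof -
    have "\<rho>$i$j + complex_of_real \<epsilon> * Lop H E g \<rho> $i$j + complex_of_real (\<epsilon>^2) * ?G$i$j
       = complex_of_real (1 + \<epsilon>^2 * Re (tau H E g \<rho>)) * \<rho>$i$j"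
      using arg_cong[OF e2, of "\<lambda>X. X$i$j"] by simp
    then have "complex_of_real \<epsilon> * Lop H E g \<rho> $i$j
        = complex_of_real \<epsilon> * (complex_of_real \<epsilon> * (complex_of_real (Re (tau H E g \<rho>)) * \<rho>$i$j - ?G$i$j))"
      by (simp add: algebra_simps power2_eq_square)
    then have "Lop H E g \<rho> $i$j = complex_of_real \<epsilon> * (complex_of_real (Re (tau H E g \<rho>)) * \<rho>$i$j - ?G$i$j)"
      using assms(2) by simp
    then show "Lop H E g \<rho> $i$j = (\<epsilon> *\<^sub>R Zf H E g \<rho>)$i$j"
      unfolding Zf_def scaleR_mscale by (simp add: algebra_simps)
  qed
  then show ?thesis by (simp add: vec_eq_iff)
qed

end


lemma linear_sandwich: "linear (\<lambda>\<rho>. (G::complex^'v::finite^'v) ** \<rho> ** adjoint G)"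
proof (rule linearI)
  fix x y show "G ** (x + y) ** adjoint G = G ** x ** adjoint G + G ** y ** adjoint G"
    by (simp add: matrix_add_ldistrib matrix_add_rdistrib)
next
  fix r x show "G ** (r *\<^sub>R x) ** adjoint G = r *\<^sub>R (G ** x ** adjoint G)"
    unfolding scaleR_mscale by (simp add: mscale_mult_l mscale_mult_r)
qed

lemma cont_lin: "linear (f :: complex^'v::finite^'v \<Rightarrow> complex^'v^'v) \<Longrightarrow> continuous_on S f"
  by (rule linear_continuous_on) (simp add: linear_conv_bounded_linear)

lemma exists_stationary:
  fixes H :: "complex^'v::finite^'v" and E :: "('v \<times> 'v) set"
  assumes hH: "hermitian H" and greal: "\<forall>e. cnj (g e) = g e" and gpos: "\<forall>e\<in>E. 0 < Re (g e)"
  shows "\<exists>\<rho>. density_matrix \<rho> \<and> Lop H E g \<rho> = 0"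
proof -
  define D where "D = {B :: complex^'v^'v. density_matrix B}"
  have cD: "compact D" and vD: "convex D" and nD: "D \<noteq> {}"
    unfolding D_def using dm_compact dm_convex Pr_dm by auto
  have csand: "continuous_on D (\<lambda>\<rho>. Gm H E g ** \<rho> ** adjoint (Gm H E g))"
    by (rule cont_lin[OF linear_sandwich])
  have ctau: "continuous_on D (\<lambda>\<rho>. Re (tau H E g \<rho>))"
    unfolding tau_def mtrace_def by (intro continuous_intros csand)
  have cZ: "continuous_on D (Zf H E g)"
    unfolding Zf_def by (intro continuous_intros ctau csand)
  have "bounded (Zf H E g ` D)" by (rule compact_imp_bounded[OF compact_continuous_image[OF cZ cD]])
  then obtain C where C: "\<And>\<rho>. \<rho> \<in> D \<Longrightarrow> norm (Zf H E g \<rho>) \<le> C"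
    unfolding bounded_iff by blast
  have cL: "continuous_on D (\<lambda>\<rho>. norm (Lop H E g \<rho>))"
    by (intro continuous_intros cont_lin[OF linear_Lop])
  obtain \<rho>0 where r0: "\<rho>0 \<in> D" and mn: "\<And>\<rho>. \<rho> \<in> D \<Longrightarrow> norm (Lop H E g \<rho>0) \<le> norm (Lop H E g \<rho>)"
    using continuous_attains_inf[OF cD nD cL] by blast
  have C0: "0 \<le> C" using C[OF r0] norm_ge_zero order_trans by blast
  have bnd: "norm (Lop H E g \<rho>0) \<le> \<epsilon> * C" if ep: "0 < \<epsilon>" for \<epsilon>
  proof -
    have fim: "Phi H E g \<epsilon> \<in> D \<rightarrow> D"
      unfolding D_def using Phi_dm[OF hH greal gpos] ep by auto
    obtain \<rho> where rD: "\<rho> \<in> D" and fx: "Phi H E g \<epsilon> \<rho> = \<rho>"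
      using brouwer[OF cD vD nD _ fim] cont_Phi[OF hH greal gpos] unfolding D_def by blast
    have "Lop H E g \<rho> = \<epsilon> *\<^sub>R Zf H E g \<rho>"
      by (rule Phi_fix[OF hH greal gpos _ ep fx]) (use rD D_def in simp)
    then have "norm (Lop H E g \<rho>) = \<epsilon> * norm (Zf H E g \<rho>)" using ep by simp
    also have "\<dots> \<le> \<epsilon> * C" using C[OF rD] ep by (simp add: mult_left_mono)
    finally show ?thesis using mn[OF rD] by linarith
  qed
  have "norm (Lop H E g \<rho>0) = 0"
  proof (rule ccontr)
    let ?m = "norm (Lop H E g \<rho>0)"
    assume "?m \<noteq> 0"
    then have mp: "0 < ?m" by simp
    have "?m \<le> (?m / (C + 1)) * C" by (rule bnd) (use mp C0 in simp)
    also have "\<dots> < ?m" using mp C0 by (simp add: field_simps)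
    finally show False by simp
  qed
  then show ?thesis using r0 unfolding D_def by auto
qed

theorem theorem2:
  fixes E :: "('v::finite \<times> 'v) set"
    and c :: "'v \<times> 'v \<Rightarrow> complex"
    and H :: "complex^'v^'v"
  assumes "weakly_connected E"
    and "\<exists>!C. condensation_sink E C"
    and "\<forall>e\<in>E. c e \<noteq> 0"
    and "hermitian H"
  shows "relaxing H ((\<lambda>(v, w). mscale (c (v, w)) (ketbra w v)) ` E)"
proof -
  define g where "g e = cnj (c e) * c e" for e
  have greal: "\<forall>e. cnj (g e) = g e" by (simp add: g_def mult.commute)
  have gpos: "\<forall>e\<in>E. 0 < Re (g e)"
  proof
    fix e assume "e \<in> E"
    then have "c e \<noteq> 0" using assms(3) by blast
    moreover have "Re (g e) = (cmod (c e))^2" by (simp only: g_def Re_cnj_self)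
    ultimately show "0 < Re (g e)" by simp
  qed
  have eq: "\<And>\<rho>. gksl H ((\<lambda>(v, w). mscale (c (v, w)) (ketbra w v)) ` E) \<rho> = Lop H E g \<rho>"
    unfolding g_def by (rule gksl_eq[OF assms(3)])
  obtain \<rho> where r: "density_matrix \<rho>" "Lop H E g \<rho> = 0"
    using exists_stationary[OF assms(4) greal gpos] by blast
  show ?thesis unfolding relaxing_def stationary_state_def eq
  proof (rule ex1I[of _ \<rho>])
    show "density_matrix \<rho> \<and> Lop H E g \<rho> = 0" using r by simp
    fix \<sigma> assume "density_matrix \<sigma> \<and> Lop H E g \<sigma> = 0"
    then show "\<sigma> = \<rho>" using uniq_stationary[OF assms(4) greal gpos assms(2)] r by blast
  qed
qed


end
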